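(* Let $\Delta=\Delta(f)$ be a positive integer and $\lambda=\lambda(f)>0$ a real number, both depending on a real parameter $f$, such that $f\le \Delta^2+1$ and, as $f\to\infty$, \[ \Delta\log(1+\lambda)\to\infty \quad\text{ and }\quad \frac{2(\Delta\log(1+\lambda))^2}{f\,W(\Delta\log(1+\lambda))}\to 0\,. \] Then there is a function $\delta(f)\to 0$ as $f\to\infty$ such that for every such $f$ and every graph $G$ of maximum degree $\Delta$ in which the neighbourhood of every vertex spans at most $\Delta^2/f$ edges, writing $\mathbf{I}$ for the random independent set from the hard-core model on $G$ at fugacity $\lambda$, \[ \frac{1}{|V(G)|}\mathbb{E}|\mathbf{I}| \ge (1+\delta(f))\frac{\lambda}{1+\lambda}\cdot\frac{W(\Delta\log(1+\lambda))}{\Delta\log(1+\lambda)}\,. \]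
   Context: $\log$ is the natural logarithm. $W:[-1/e,\infty)\to[-1,\infty)$ is the Lambert $W$ function, the inverse of $z\mapsto ze^z$. For a graph $G$ with set $\mathcal{I}(G)$ of independent sets (including the empty set) and $\lambda>0$, the hard-core model on $G$ at fugacity $\lambda$ is the probability distribution on $\mathcal{I}(G)$ with $\Pr(\mathbf{I}=I)=\lambda^{|I|}/Z_G(\lambda)$, where $Z_G(\lambda)=\sum_{I\in\mathcal{I}(G)}\lambda^{|I|}$. "The neighbourhood of a vertex $v$ spans at most $m$ edges" means the subgraph induced by $N(v)$ has at most $m$ edges. *)

theory Defs
  imports Complex_Main
begin

definition lambertW :: "real \<Rightarrow> real" where
  "lambertW x = (THE w. w \<ge> -1 \<and> w * exp w = x)"

definition simple_graph :: "'a set \<Rightarrow> 'a set set \<Rightarrow> bool" where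
  "simple_graph V E \<longleftrightarrow> finite V \<and>
     (\<forall>e\<in>E. \<exists>u v. u \<noteq> v \<and> u \<in> V \<and> v \<in> V \<and> e = {u, v})"

definition neighbours :: "'a set set \<Rightarrow> 'a \<Rightarrow> 'a set" where
  "neighbours E v = {u. {u, v} \<in> E}"

definition degree :: "'a set set \<Rightarrow> 'a \<Rightarrow> nat" where
  "degree E v = card (neighbours E v)"

definition nbhd_edges :: "'a set set \<Rightarrow> 'a \<Rightarrow> nat" where
  "nbhd_edges E v = card {e \<in> E. e \<subseteq> neighbours E v}"

definition indep_sets :: "'a set \<Rightarrow> 'a set set \<Rightarrow> 'a set set" where
  "indep_sets V E = {I. I \<subseteq> V \<and> (\<forall>u\<in>I. \<forall>v\<in>I. {u, v} \<notin> E)}"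

definition hardcore_Z :: "'a set \<Rightarrow> 'a set set \<Rightarrow> real \<Rightarrow> real" where
  "hardcore_Z V E lam = (\<Sum>I\<in>indep_sets V E. lam ^ card I)"

definition hardcore_expected_size :: "'a set \<Rightarrow> 'a set set \<Rightarrow> real \<Rightarrow> real" where
  "hardcore_expected_size V E lam =
     (\<Sum>I\<in>indep_sets V E. real (card I) * (lam ^ card I / hardcore_Z V E lam))"

end

theory Submission
  imports Defs
begin


lemma lambertW_prop:
  assumes "x > 0"
  shows "lambertW x > 0" "lambertW x * exp (lambertW x) = x"
proof -
  have ex: "\<exists>w. 0 \<le> w \<and> w \<le> x \<and> w * exp w = x"
  proof (rule IVT[of "\<lambda>w. w * exp w"])
    show "0 * exp 0 \<le> x" using assms by simp
    have "exp x \<ge> 1" using assms by simp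
    then show "x \<le> x * exp x" using assms by (simp add: mult_le_cancel_left1 less_imp_le)
  qed (use assms in \<open>auto intro!: continuous_intros\<close>)
  then obtain w where w: "0 \<le> w" "w * exp w = x" by blast
  have uniq: "v = w" if "v \<ge> -1" "v * exp v = x" for v
  proof -
    have vpos: "v > 0"
    proof (rule ccontr)
      assume "\<not> v > 0" then have "v * exp v \<le> 0" by (simp add: mult_nonpos_nonneg)
      with that assms show False by simp
    qed
    have wpos: "w > 0" using w assms by (cases "w = 0") auto
    show ?thesis
    proof (rule ccontr)
      assume "v \<noteq> w"
      then consider "v < w" | "w < v" by linarith
      then show False
      proof cases
        case 1
        then have "v * exp v < w * exp w"
          using vpos by (intro mult_strict_mono) auto
        then show False using w that by simp
      next
        case 2
        then have "w * exp w < v * exp v"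
          using wpos by (intro mult_strict_mono) auto
        then show False using w that by simp
      qed
    qed
  qed
  have "lambertW x = w"
    unfolding lambertW_def
    by (rule the_equality) (use w uniq in auto)
  then show "lambertW x > 0" "lambertW x * exp (lambertW x) = x"
    using w assms by (auto intro: ccontr)
qed

lemma pow_sum_Pow:
  assumes "finite Y"
  shows "(\<Sum>S\<in>Pow Y. (lam::real) ^ card S) = (1 + lam) ^ card Y"
  using prod_add[OF assms, of "\<lambda>_. lam" "\<lambda>_. 1"] by (simp add: add.commute)

lemma ln_ge_A: "(lam::real) > 0 \<Longrightarrow> lam / (1 + lam) \<le> ln (1 + lam)"
proof -
  assume "lam > 0"
  have "ln (1 / (1 + lam)) \<le> 1 / (1 + lam) - 1" by (rule ln_le_minus_one) (use \<open>lam>0\<close> in auto)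
  moreover have "ln (1 / (1 + lam)) = - ln (1 + lam)" using \<open>lam>0\<close> by (simp add: ln_div)
  moreover have "1 / (1 + lam) - 1 = - (lam / (1 + lam))" using \<open>lam>0\<close> by (simp add: field_simps)
  ultimately show ?thesis by linarith
qed



definition Zp :: "'a set \<Rightarrow> 'a set set \<Rightarrow> real \<Rightarrow> real" where
  "Zp Y E lam = (\<Sum>S\<in>indep_sets Y E. real (card S) * lam ^ card S)"

lemma finite_indep: "finite Y \<Longrightarrow> finite (indep_sets Y E)"
  unfolding indep_sets_def by (rule finite_subset[of _ "Pow Y"]) auto

lemma indep_subset: "S \<in> indep_sets Y E \<Longrightarrow> S \<subseteq> Y"
  unfolding indep_sets_def by auto

lemma Z_ge1: assumes "finite Y" "lam > 0" shows "hardcore_Z Y E lam \<ge> 1"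
proof -
  have "{} \<in> indep_sets Y E" unfolding indep_sets_def by auto
  then have "lam ^ card ({}::'a set) \<le> hardcore_Z Y E lam"
    unfolding hardcore_Z_def
    by (intro member_le_sum) (use assms finite_indep in auto)
  then show ?thesis by simp
qed

lemma Z_le: assumes "finite Y" "lam > 0" shows "hardcore_Z Y E lam \<le> (1 + lam) ^ card Y"
proof -
  have "hardcore_Z Y E lam \<le> (\<Sum>S\<in>Pow Y. lam ^ card S)"
    unfolding hardcore_Z_def
    by (rule sum_mono2) (use assms in \<open>auto simp: indep_sets_def\<close>)
  then show ?thesis using pow_sum_Pow[OF assms(1)] by simp
qed

lemma ins_lemma:
  assumes finY: "finite Y" and uY: "u \<in> Y" and edges2: "\<forall>e\<in>E. \<exists>a b. a \<noteq> b \<and> e = {a, b}"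
  shows "(\<Sum>S\<in>{S\<in>indep_sets Y E. u\<in>S}. (lam::real) ^ card S)
       = lam * (\<Sum>S\<in>{S\<in>indep_sets Y E. u\<notin>S \<and> (\<forall>w\<in>S. {u,w}\<notin>E)}. lam ^ card S)"
proof -
  have uu: "{u,u} \<notin> E" using edges2 by (auto simp: doubleton_eq_iff)
  have "lam * (\<Sum>S\<in>{S\<in>indep_sets Y E. u\<notin>S \<and> (\<forall>w\<in>S. {u,w}\<notin>E)}. lam ^ card S)
      = (\<Sum>S\<in>{S\<in>indep_sets Y E. u\<notin>S \<and> (\<forall>w\<in>S. {u,w}\<notin>E)}. lam ^ card (insert u S))"
    unfolding sum_distrib_left
  proof (rule sum.cong)
    fix S assume "S \<in> {S\<in>indep_sets Y E. u\<notin>S \<and> (\<forall>w\<in>S. {u,w}\<notin>E)}"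
    then have "finite S" "u \<notin> S" using finY by (auto simp: indep_sets_def intro: finite_subset)
    then show "lam * lam ^ card S = lam ^ card (insert u S)" by simp
  qed simp
  also have "\<dots> = (\<Sum>S\<in>{S\<in>indep_sets Y E. u\<in>S}. (lam::real) ^ card S)"
  proof (rule sum.reindex_bij_witness[where i = "\<lambda>S. S - {u}" and j = "insert u"])
    fix S assume "S \<in> {S\<in>indep_sets Y E. u\<notin>S \<and> (\<forall>w\<in>S. {u,w}\<notin>E)}"
    then show "insert u S - {u} = S" "insert u S \<in> {S\<in>indep_sets Y E. u\<in>S}"
      "lam ^ card (insert u S) = lam ^ card (insert u S)"
      using uY uu by (auto simp: indep_sets_def insert_commute)
  next
    fix S assume "S \<in> {S\<in>indep_sets Y E. u\<in>S}"
    then show "insert u (S - {u}) = S" "S - {u} \<in> {S\<in>indep_sets Y E. u\<notin>S \<and> (\<forall>w\<in>S. {u,w}\<notin>E)}"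
      by (auto simp: indep_sets_def)
  qed
  finally show ?thesis by simp
qed



lemma handshake:
  assumes finY: "finite Y" and edges2: "\<forall>e\<in>E. \<exists>a b. a \<noteq> b \<and> e = {a, b}"
  shows "(\<Sum>u\<in>Y. card {w\<in>Y. {u,w}\<in>E}) = 2 * card {e\<in>E. e \<subseteq> Y}"
proof -
  define P where "P = Sigma Y (\<lambda>u. {w\<in>Y. {u,w}\<in>E})"
  define Em where "Em = {e\<in>E. e \<subseteq> Y}"
  define g :: "'a \<times> 'a \<Rightarrow> 'a set" where "g = (\<lambda>p. {fst p, snd p})"
  have finP: "finite P" using finY unfolding P_def by auto
  have finEm: "finite Em" unfolding Em_def by (rule finite_subset[of _ "Pow Y"]) (use finY in auto)
  have gP: "g ` P \<subseteq> Em" unfolding g_def P_def Em_def by auto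
  have "(\<Sum>u\<in>Y. card {w\<in>Y. {u,w}\<in>E}) = card P"
    using finY unfolding P_def by (simp add: card_SigmaI)
  also have "card P = (\<Sum>p\<in>P. 1)" by simp
  also have "\<dots> = (\<Sum>e\<in>Em. \<Sum>p\<in>{p\<in>P. g p = e}. 1)"
    by (rule sum.group[symmetric, OF finP finEm gP])
  also have "\<dots> = (\<Sum>e\<in>Em. 2)"
  proof (rule sum.cong[OF refl])
    fix e assume "e \<in> Em"
    then have eE: "e \<in> E" and eY: "e \<subseteq> Y" unfolding Em_def by auto
    from eE edges2 obtain a b where ab0: "a \<noteq> b" "e = {a,b}" by meson
    have ab: "a \<noteq> b" "e = {a,b}" "e \<in> E" "a \<in> Y" "b \<in> Y" using ab0 eE eY by auto
    have "{p\<in>P. g p = e} = {(a,b),(b,a)}"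
    proof (intro equalityI subsetI)
      fix p assume "p \<in> {p\<in>P. g p = e}"
      then have "{fst p, snd p} = {a,b}" unfolding g_def ab(2) by simp
      then have "(fst p = a \<and> snd p = b) \<or> (fst p = b \<and> snd p = a)" by (simp add: doubleton_eq_iff)
      then show "p \<in> {(a,b),(b,a)}" by (metis insertCI prod.collapse)
    next
      fix p assume p: "p \<in> {(a,b),(b,a)}"
      have ba: "{b,a} = e" using ab(2) by (simp add: insert_commute)
      have "(a,b) \<in> P" "(b,a) \<in> P" using ab ba unfolding P_def by simp_all
      moreover have "g (a,b) = e" "g (b,a) = e" using ab(2) ba unfolding g_def by simp_all
      ultimately show "p \<in> {p\<in>P. g p = e}" using p by blast
    qed
    then show "(\<Sum>p\<in>{p\<in>P. g p = e}. 1) = (2::nat)" using ab(1) by simp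
  qed
  finally show ?thesis unfolding Em_def by simp
qed
lemma local_lemma:
  assumes finY: "finite Y" and edges2: "\<forall>e\<in>E. \<exists>a b. a \<noteq> b \<and> e = {a, b}" and lam: "lam > 0"
  shows "Zp Y E lam \<ge> lam/(1+lam) * (real (card Y) - 2 * (lam/(1+lam)) * real (card {e\<in>E. e \<subseteq> Y}))
            * hardcore_Z Y E lam"
proof -
  define A where "A = lam/(1+lam)"
  define SS where "SS = indep_sets Y E"
  define Z where "Z = hardcore_Z Y E lam"
  define P where "P u = (\<Sum>S\<in>{S\<in>SS. u\<in>S}. lam ^ card S)" for u
  define NY where "NY u = {w\<in>Y. {u,w}\<in>E}" for u
  have finSS: "finite SS" unfolding SS_def using finite_indep[OF finY] .
  have Zdef: "Z = (\<Sum>S\<in>SS. lam ^ card S)" unfolding Z_def SS_def hardcore_Z_def ..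
  have Pif: "P u = (\<Sum>S\<in>SS. if u \<in> S then lam ^ card S else 0)" for u
    unfolding P_def using finSS by (simp add: sum.inter_filter)
  have A_pos: "A > 0" "A < 1" using lam unfolding A_def by auto
  have a: "Zp Y E lam = (\<Sum>u\<in>Y. P u)"
  proof -
    have "Zp Y E lam = (\<Sum>S\<in>SS. \<Sum>u\<in>Y. if u \<in> S then lam ^ card S else 0)"
      unfolding Zp_def SS_def
    proof (rule sum.cong)
      fix S assume "S \<in> indep_sets Y E"
      then have "S \<subseteq> Y" by (rule indep_subset)
      then have "S = Y \<inter> S" by auto
      then have "(\<Sum>u\<in>Y. if u \<in> S then lam ^ card S else 0) = real (card S) * lam ^ card S"
        using finY by (simp add: sum.If_cases)
      then show "real (card S) * lam ^ card S = (\<Sum>u\<in>Y. if u \<in> S then lam ^ card S else 0)" by simp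
    qed simp
    also have "\<dots> = (\<Sum>u\<in>Y. P u)" unfolding Pif by (rule sum.swap)
    finally show ?thesis .
  qed
  have free_sum: "P u = lam * (\<Sum>S\<in>SS. if u \<notin> S \<and> (\<forall>w\<in>S. {u,w}\<notin>E) then lam ^ card S else 0)"
    if "u \<in> Y" for u
    using ins_lemma[OF finY that edges2, of lam] finSS
    unfolding P_def SS_def by (simp add: sum.inter_filter)
  have b: "P u \<le> A * Z" if "u \<in> Y" for u
  proof -
    define a where "a = (\<Sum>S\<in>SS. if u \<notin> S \<and> (\<forall>w\<in>S. {u,w}\<notin>E) then lam ^ card S else 0)"
    have "Z \<ge> P u + a"
      unfolding Zdef Pif a_def sum.distrib[symmetric]
      by (rule sum_mono) (use lam in auto)
    moreover have "P u = lam * a" using free_sum[OF that] unfolding a_def .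
    ultimately have "lam * ((1 + lam) * a) \<le> lam * Z" using lam
      by (intro mult_left_mono) (auto simp: algebra_simps)
    then have "(1 + lam) * P u \<le> lam * Z" using \<open>P u = lam * a\<close> by (simp add: algebra_simps)
    then show ?thesis unfolding A_def using lam by (simp add: field_simps)
  qed
  have c: "P u \<ge> A * (Z - (\<Sum>w\<in>NY u. P w))" if "u \<in> Y" for u
  proof -
    define a where "a = (\<Sum>S\<in>SS. if u \<notin> S \<and> (\<forall>w\<in>S. {u,w}\<notin>E) then lam ^ card S else 0)"
    define b where "b = (\<Sum>S\<in>SS. if u \<notin> S \<and> \<not>(\<forall>w\<in>S. {u,w}\<notin>E) then lam ^ card S else 0)"
    have "Z = P u + a + b"
      unfolding Zdef Pif a_def b_def sum.distrib[symmetric]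
      by (rule sum.cong) auto
    moreover have "P u = lam * a" using free_sum[OF that] unfolding a_def .
    moreover have "b \<le> (\<Sum>w\<in>NY u. P w)"
    proof -
      have "b \<le> (\<Sum>S\<in>SS. \<Sum>w\<in>NY u. if w \<in> S then lam ^ card S else 0)"
        unfolding b_def
      proof (rule sum_mono)
        fix S assume S: "S \<in> SS"
        show "(if u \<notin> S \<and> \<not>(\<forall>w\<in>S. {u,w}\<notin>E) then lam ^ card S else 0)
              \<le> (\<Sum>w\<in>NY u. if w \<in> S then lam ^ card S else 0)"
        proof (cases "u \<notin> S \<and> \<not>(\<forall>w\<in>S. {u,w}\<notin>E)")
          case True
          then obtain w where w: "w \<in> S" "{u,w} \<in> E" by auto
          have "w \<in> NY u" using w S indep_subset unfolding NY_def SS_def by blast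
          moreover have "finite (NY u)" unfolding NY_def using finY by auto
          ultimately have "(if w \<in> S then lam ^ card S else 0) \<le> (\<Sum>w\<in>NY u. if w \<in> S then lam ^ card S else 0)"
            by (intro member_le_sum) (use lam in auto)
          then show ?thesis using True w by simp
        next
          case False
          have "(\<Sum>w\<in>NY u. if w \<in> S then lam ^ card S else 0) \<ge> 0"
            by (rule sum_nonneg) (use lam in auto)
          then show ?thesis using False by (simp only: if_False)
        qed
      qed
      also have "\<dots> = (\<Sum>w\<in>NY u. P w)" unfolding Pif by (rule sum.swap)
      finally show ?thesis .
    qed
    ultimately have e1: "(1 + lam) * P u = lam * (Z - b)" "b \<le> (\<Sum>w\<in>NY u. P w)"
      by (simp_all add: algebra_simps)
    have "lam * b \<le> lam * (\<Sum>w\<in>NY u. P w)" using e1(2) lam by (intro mult_left_mono) auto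
    then have "(1 + lam) * P u \<ge> lam * (Z - (\<Sum>w\<in>NY u. P w))" using e1(1) by (simp add: algebra_simps)
    then show ?thesis unfolding A_def using lam by (simp add: field_simps)
  qed
  have d: "P u \<ge> A * (Z - real (card (NY u)) * (A * Z))" if "u \<in> Y" for u
  proof -
    have "(\<Sum>w\<in>NY u. P w) \<le> (\<Sum>w\<in>NY u. A * Z)"
      by (rule sum_mono) (use b NY_def in auto)
    also have "\<dots> = real (card (NY u)) * (A * Z)" by simp
    finally have "Z - (\<Sum>w\<in>NY u. P w) \<ge> Z - real (card (NY u)) * (A * Z)" by linarith
    then have "A * (Z - (\<Sum>w\<in>NY u. P w)) \<ge> A * (Z - real (card (NY u)) * (A * Z))"
      using A_pos by (intro mult_left_mono) auto
    then show ?thesis using c[OF that] by linarith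
  qed
  have "Zp Y E lam \<ge> (\<Sum>u\<in>Y. A * (Z - real (card (NY u)) * (A * Z)))"
    unfolding a by (rule sum_mono) (use d in auto)
  also have "(\<Sum>u\<in>Y. A * (Z - real (card (NY u)) * (A * Z)))
      = (\<Sum>u\<in>Y. A * Z - (A * (A * Z)) * real (card (NY u)))"
    by (rule sum.cong) (simp_all add: algebra_simps)
  also have "\<dots> = real (card Y) * (A * Z) - (A * (A * Z)) * (\<Sum>u\<in>Y. real (card (NY u)))"
    by (simp add: sum_subtractf sum_distrib_left)
  also have "(\<Sum>u\<in>Y. real (card (NY u))) = 2 * real (card {e\<in>E. e \<subseteq> Y})"
    using handshake[OF finY edges2] unfolding NY_def of_nat_sum[symmetric] by simp
  also have "real (card Y) * (A * Z) - (A * (A * Z)) * (2 * real (card {e\<in>E. e \<subseteq> Y}))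
     = A * (real (card Y) - 2 * A * real (card {e\<in>E. e \<subseteq> Y})) * Z"
    by (simp add: algebra_simps)
  finally show ?thesis unfolding A_def Z_def .
qed



definition TT :: "'a set \<Rightarrow> 'a set set \<Rightarrow> 'a \<Rightarrow> 'a set set" where
  "TT V E v = {T\<in>indep_sets V E. T \<inter> neighbours E v = {}}"

definition YY :: "'a set set \<Rightarrow> 'a \<Rightarrow> 'a set \<Rightarrow> 'a set" where
  "YY E v T = {u\<in>neighbours E v. \<forall>t\<in>T. {t,u}\<notin>E}"

lemma sg_edges2: "simple_graph V E \<Longrightarrow> \<forall>e\<in>E. \<exists>a b. a \<noteq> b \<and> e = {a, b}"
  unfolding simple_graph_def by blast

lemma sg_edgeV: assumes "simple_graph V E" "{a,b} \<in> E" shows "a \<in> V \<and> b \<in> V"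
proof -
  have "\<forall>e\<in>E. \<exists>u w. u \<noteq> w \<and> u \<in> V \<and> w \<in> V \<and> e = {u, w}"
    using assms(1) unfolding simple_graph_def by (rule conjunct2)
  from this[rule_format, OF assms(2)] obtain u w where uw: "u \<in> V" "w \<in> V" "{a,b} = {u,w}"
    by blast
  have "a \<in> {a,b}" "b \<in> {a,b}" by simp_all
  then have "a \<in> {u,w}" "b \<in> {u,w}" unfolding uw(3) .
  then show ?thesis using uw(1,2) by blast
qed

lemma sg_finite: "simple_graph V E \<Longrightarrow> finite V"
  unfolding simple_graph_def by (rule conjunct1)

lemma nb_sub: assumes "simple_graph V E" shows "neighbours E v \<subseteq> V"
proof (rule subsetI)
  fix u assume "u \<in> neighbours E v"
  then have "{u,v} \<in> E" by (simp add: neighbours_def)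
  from sg_edgeV[OF assms this] show "u \<in> V" by (rule conjunct1)
qed

lemma nb_loop: assumes "simple_graph V E" shows "{v,v} \<notin> E"
proof
  assume vv: "{v,v} \<in> E"
  have "\<forall>e\<in>E. \<exists>u w. u \<noteq> w \<and> u \<in> V \<and> w \<in> V \<and> e = {u, w}"
    using assms(1) unfolding simple_graph_def by (rule conjunct2)
  from this[rule_format, OF vv] obtain u w where uw: "u \<noteq> w" "{v,v} = {u,w}"
    by blast
  have "u \<in> {u,w}" "w \<in> {u,w}" by simp_all
  then have "u \<in> {v,v}" "w \<in> {v,v}" unfolding uw(2) .
  then show False using uw(1) by simp
qed

lemma v_notin_nb: assumes "simple_graph V E" shows "v \<notin> neighbours E v"
  using nb_loop[OF assms] by (simp add: neighbours_def)

lemma YY_sub: "YY E v T \<subseteq> neighbours E v" unfolding YY_def by (rule Collect_restrict)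

lemma finite_YY: assumes "simple_graph V E" shows "finite (YY E v T)"
  by (rule finite_subset[OF subset_trans[OF YY_sub nb_sub[OF assms]] sg_finite[OF assms]])

lemma finite_TT: assumes "simple_graph V E" shows "finite (TT V E v)"
proof -
  have "finite (indep_sets V E)" by (rule finite_indep[OF sg_finite[OF assms]])
  then show ?thesis unfolding TT_def by simp
qed

lemma decomp:
  assumes G: "simple_graph V E"
  shows "(\<Sum>I\<in>indep_sets V E. F I) = (\<Sum>T\<in>TT V E v. \<Sum>S\<in>indep_sets (YY E v T) E. F (T \<union> S))"
proof -
  let ?N = "neighbours E v"
  let ?Sig = "Sigma (TT V E v) (\<lambda>T. indep_sets (YY E v T) E)"
  have NV: "?N \<subseteq> V" using nb_sub[OF G] .
  have fin1: "finite (TT V E v)" by (rule finite_TT[OF G])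
  have fin2: "\<forall>T\<in>TT V E v. finite (indep_sets (YY E v T) E)"
    using finite_indep[OF finite_YY[OF G]] by blast
  have "(\<Sum>T\<in>TT V E v. \<Sum>S\<in>indep_sets (YY E v T) E. F (T \<union> S)) = (\<Sum>(T,S)\<in>?Sig. F (T \<union> S))"
    by (rule sum.Sigma[OF fin1 fin2])
  also have "\<dots> = (\<Sum>I\<in>indep_sets V E. F I)"
  proof (rule sum.reindex_bij_witness[where i = "\<lambda>I. (I - ?N, I \<inter> ?N)" and j = "\<lambda>(T,S). T \<union> S"])
    fix p assume p: "p \<in> ?Sig"
    obtain T S where pTS: "p = (T, S)" by (cases p)
    have TT: "T \<in> TT V E v" and SI: "S \<in> indep_sets (YY E v T) E" using p unfolding pTS by simp_all
    have T: "T \<subseteq> V" "\<forall>a\<in>T. \<forall>b\<in>T. {a,b} \<notin> E" "T \<inter> ?N = {}"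
      using TT by (simp_all add: TT_def indep_sets_def)
    have S: "S \<subseteq> YY E v T" "\<forall>a\<in>S. \<forall>b\<in>S. {a,b} \<notin> E"
      using SI by (simp_all add: indep_sets_def)
    have SN: "S \<subseteq> ?N" using S(1) YY_sub by (rule subset_trans)
    have ST: "\<forall>t\<in>T. \<forall>s\<in>S. {t,s} \<notin> E"
    proof (intro ballI)
      fix t s assume "t \<in> T" "s \<in> S"
      then have "s \<in> YY E v T" using S(1) by (rule_tac subsetD) auto
      then show "{t,s} \<notin> E" using \<open>t \<in> T\<close> unfolding YY_def by simp
    qed
    have e1: "T \<union> S - ?N = T" using T(3) SN by blast
    have e2: "(T \<union> S) \<inter> ?N = S" using T(3) SN by blast
    show "((\<lambda>(T,S). T \<union> S) p - ?N, (\<lambda>(T,S). T \<union> S) p \<inter> ?N) = p"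
      unfolding pTS using e1 e2 by simp
    show "(\<lambda>(T,S). T \<union> S) p \<in> indep_sets V E"
      unfolding indep_sets_def pTS split
    proof (intro CollectI conjI ballI)
      show "T \<union> S \<subseteq> V" using T(1) SN NV by blast
      fix a b assume ab: "a \<in> T \<union> S" "b \<in> T \<union> S"
      then consider "a \<in> T" "b \<in> T" | "a \<in> T" "b \<in> S" | "a \<in> S" "b \<in> T" | "a \<in> S" "b \<in> S"
        by blast
      then show "{a,b} \<notin> E"
      proof cases
        case 1 then show ?thesis using T(2) by blast
      next
        case 2 then show ?thesis using ST by blast
      next
        case 3
        then have "{b,a} \<notin> E" using ST by blast
        moreover have "{b,a} = {a,b}" by (rule insert_commute)
        ultimately show ?thesis by simp
      next
        case 4 then show ?thesis using S(2) by blast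
      qed
    qed
    show "F ((\<lambda>(T,S). T \<union> S) p) = (case p of (T, S) \<Rightarrow> F (T \<union> S))"
      unfolding pTS by simp
  next
    fix I assume I: "I \<in> indep_sets V E"
    then have Iind: "I \<subseteq> V" "\<forall>a\<in>I. \<forall>b\<in>I. {a,b} \<notin> E" by (simp_all add: indep_sets_def)
    show "(\<lambda>(T,S). T \<union> S) (I - ?N, I \<inter> ?N) = I" by auto
    have "I - ?N \<in> TT V E v" unfolding TT_def indep_sets_def using Iind by blast
    moreover have "I \<inter> ?N \<in> indep_sets (YY E v (I - ?N)) E"
    proof -
      have "I \<inter> ?N \<subseteq> YY E v (I - ?N)" unfolding YY_def using Iind(2) by blast
      moreover have "\<forall>a\<in>I \<inter> ?N. \<forall>b\<in>I \<inter> ?N. {a,b} \<notin> E" using Iind(2) by blast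
      ultimately show ?thesis unfolding indep_sets_def by simp
    qed
    ultimately show "(I - ?N, I \<inter> ?N) \<in> ?Sig" by simp
  qed
  finally show ?thesis by simp
qed



lemma TS_facts:
  assumes G: "simple_graph V E" and T: "T \<in> TT V E v" and S: "S \<in> indep_sets (YY E v T) E"
  shows "finite T" "finite S" "T \<inter> S = {}" "(T \<union> S) \<inter> neighbours E v = S"
proof -
  have TV: "T \<subseteq> V" and TN: "T \<inter> neighbours E v = {}" using T by (simp_all add: TT_def indep_sets_def)
  have SN: "S \<subseteq> neighbours E v" using indep_subset[OF S] YY_sub by (rule subset_trans)
  show "finite T" using TV sg_finite[OF G] by (rule finite_subset)
  show "finite S" using SN nb_sub[OF G] sg_finite[OF G] by (meson finite_subset)
  show "T \<inter> S = {}" using TN SN by blast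
  show "(T \<union> S) \<inter> neighbours E v = S" using TN SN by blast
qed

lemma Z_decomp:
  assumes G: "simple_graph V E"
  shows "hardcore_Z V E lam = (\<Sum>T\<in>TT V E v. lam ^ card T * hardcore_Z (YY E v T) E lam)"
proof -
  have "hardcore_Z V E lam = (\<Sum>T\<in>TT V E v. \<Sum>S\<in>indep_sets (YY E v T) E. lam ^ card (T \<union> S))"
    unfolding hardcore_Z_def by (rule decomp[OF G])
  also have "\<dots> = (\<Sum>T\<in>TT V E v. lam ^ card T * hardcore_Z (YY E v T) E lam)"
  proof (rule sum.cong[OF refl])
    fix T assume T: "T \<in> TT V E v"
    have "(\<Sum>S\<in>indep_sets (YY E v T) E. lam ^ card (T \<union> S))
        = (\<Sum>S\<in>indep_sets (YY E v T) E. lam ^ card T * lam ^ card S)"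
    proof (rule sum.cong[OF refl])
      fix S assume S: "S \<in> indep_sets (YY E v T) E"
      note f = TS_facts[OF G T S]
      have "card (T \<union> S) = card T + card S" using f(1,2,3) by (rule card_Un_disjoint)
      then show "lam ^ card (T \<union> S) = lam ^ card T * lam ^ card S" by (simp add: power_add)
    qed
    then show "(\<Sum>S\<in>indep_sets (YY E v T) E. lam ^ card (T \<union> S)) = lam ^ card T * hardcore_Z (YY E v T) E lam"
      unfolding hardcore_Z_def by (simp add: sum_distrib_left)
  qed
  finally show ?thesis .
qed

lemma N_decomp:
  assumes G: "simple_graph V E"
  shows "(\<Sum>I\<in>indep_sets V E. real (card (I \<inter> neighbours E v)) * lam ^ card I)
       = (\<Sum>T\<in>TT V E v. lam ^ card T * Zp (YY E v T) E lam)"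
proof -
  have "(\<Sum>I\<in>indep_sets V E. real (card (I \<inter> neighbours E v)) * lam ^ card I)
     = (\<Sum>T\<in>TT V E v. \<Sum>S\<in>indep_sets (YY E v T) E. real (card ((T \<union> S) \<inter> neighbours E v)) * lam ^ card (T \<union> S))"
    by (rule decomp[OF G])
  also have "\<dots> = (\<Sum>T\<in>TT V E v. lam ^ card T * Zp (YY E v T) E lam)"
  proof (rule sum.cong[OF refl])
    fix T assume T: "T \<in> TT V E v"
    have "(\<Sum>S\<in>indep_sets (YY E v T) E. real (card ((T \<union> S) \<inter> neighbours E v)) * lam ^ card (T \<union> S))
        = (\<Sum>S\<in>indep_sets (YY E v T) E. lam ^ card T * (real (card S) * lam ^ card S))"
    proof (rule sum.cong[OF refl])
      fix S assume S: "S \<in> indep_sets (YY E v T) E"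
      note f = TS_facts[OF G T S]
      have "card (T \<union> S) = card T + card S" using f(1,2,3) by (rule card_Un_disjoint)
      then show "real (card ((T \<union> S) \<inter> neighbours E v)) * lam ^ card (T \<union> S) = lam ^ card T * (real (card S) * lam ^ card S)"
        unfolding f(4) by (simp add: power_add)
    qed
    then show "(\<Sum>S\<in>indep_sets (YY E v T) E. real (card ((T \<union> S) \<inter> neighbours E v)) * lam ^ card (T \<union> S)) = lam ^ card T * Zp (YY E v T) E lam"
      unfolding Zp_def by (simp add: sum_distrib_left)
  qed
  finally show ?thesis .
qed

lemma P_decomp:
  fixes lam :: real
  assumes G: "simple_graph V E" and vV: "v \<in> V" and lam: "lam > 0"
  shows "(\<Sum>I\<in>{I\<in>indep_sets V E. v \<in> I}. lam ^ card I) = lam / (1 + lam) * (\<Sum>T\<in>TT V E v. lam ^ card T)"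
proof -
  let ?N = "neighbours E v"
  have finI: "finite (indep_sets V E)" by (rule finite_indep[OF sg_finite[OF G]])
  have s1: "{I\<in>indep_sets V E. v \<in> I} = {T\<in>TT V E v. v \<in> T}"
  proof (intro equalityI subsetI)
    fix I assume "I \<in> {I\<in>indep_sets V E. v \<in> I}"
    then have I: "I \<in> indep_sets V E" "v \<in> I" "\<forall>a\<in>I. \<forall>b\<in>I. {a,b} \<notin> E" by (simp_all add: indep_sets_def)
    have "I \<inter> ?N = {}"
    proof (rule ccontr)
      assume "I \<inter> ?N \<noteq> {}"
      then obtain w where "w \<in> I" "w \<in> ?N" by blast
      then have "{w,v} \<in> E" by (simp add: neighbours_def)
      with I(2,3) \<open>w \<in> I\<close> show False by blast
    qed
    then show "I \<in> {T\<in>TT V E v. v \<in> T}" using I(1,2) by (simp add: TT_def)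
  next
    fix I assume "I \<in> {T\<in>TT V E v. v \<in> T}"
    then show "I \<in> {I\<in>indep_sets V E. v \<in> I}" by (simp add: TT_def)
  qed
  have s2: "{I\<in>indep_sets V E. v \<notin> I \<and> (\<forall>w\<in>I. {v,w}\<notin>E)} = {T\<in>TT V E v. v \<notin> T}"
  proof -
    have "(\<forall>w\<in>I. {v,w}\<notin>E) \<longleftrightarrow> I \<inter> ?N = {}" for I
    proof -
      have "{v,w} = {w,v}" for w by (rule insert_commute)
      then show ?thesis unfolding neighbours_def by auto
    qed
    then show ?thesis unfolding TT_def by blast
  qed
  have ins: "(\<Sum>I\<in>{I\<in>indep_sets V E. v \<in> I}. lam ^ card I)
      = lam * (\<Sum>I\<in>{I\<in>indep_sets V E. v \<notin> I \<and> (\<forall>w\<in>I. {v,w}\<notin>E)}. lam ^ card I)"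
    using ins_lemma[OF sg_finite[OF G] vV sg_edges2[OF G], of lam] by simp
  define X where "X = (\<Sum>T\<in>{T\<in>TT V E v. v \<in> T}. lam ^ card T)"
  define Y where "Y = (\<Sum>T\<in>{T\<in>TT V E v. v \<notin> T}. lam ^ card T)"
  have XY: "X = lam * Y" using ins unfolding s1 s2 X_def Y_def .
  have finT: "finite (TT V E v)" by (rule finite_TT[OF G])
  have tot: "(\<Sum>T\<in>TT V E v. lam ^ card T) = X + Y"
    unfolding X_def Y_def using finT
    by (simp add: sum.inter_filter sum.distrib[symmetric] if_distrib) (rule sum.cong, auto)
  have "(1 + lam) * X = lam * (X + Y)" using XY by (simp add: algebra_simps)
  then have "X = lam / (1 + lam) * (X + Y)" using lam by (simp add: field_simps)
  then show ?thesis unfolding s1 tot X_def .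
qed



lemma exp_tangent: "exp (a::real) \<ge> exp b * (1 + a - b)"
proof -
  have "exp a = exp b * exp (a - b)" by (simp add: exp_diff)
  moreover have "exp b * (1 + (a - b)) \<le> exp b * exp (a - b)"
    by (rule mult_left_mono) (simp_all add: exp_ge_add_one_self)
  ultimately show ?thesis by (simp add: algebra_simps)
qed

lemma h1_lemma:
  fixes lam W ZY :: real and y :: nat
  assumes lam: "lam > 0" and Z0: "0 \<le> ZY" and ZY: "ZY \<le> (1 + lam) ^ y"
  shows "ZY * (exp (-W) * (1 + W - real y * ln (1 + lam))) \<le> 1"
proof -
  let ?L = "ln (1 + lam)"
  have pw: "(1 + lam) ^ y = exp (real y * ?L)"
    using lam by (simp add: exp_of_nat_mult)
  have t: "exp (-W) * (1 + W - real y * ?L) \<le> exp (- (real y * ?L))"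
  proof -
    have "exp (-W) * (1 + (- (real y * ?L)) - (-W)) \<le> exp (- (real y * ?L))" by (rule exp_tangent)
    moreover have "1 + (- (real y * ?L)) - (-W) = 1 + W - real y * ?L" by simp
    ultimately show ?thesis by (simp only:)
  qed
  have "ZY * (exp (-W) * (1 + W - real y * ?L)) \<le> ZY * exp (- (real y * ?L))"
    by (rule mult_left_mono[OF t Z0])
  also have "\<dots> \<le> exp (real y * ?L) * exp (- (real y * ?L))"
    using ZY pw by (intro mult_right_mono) auto
  also have "\<dots> = 1" by (simp add: exp_minus)
  finally show ?thesis .
qed

lemma vertex_bound:
  fixes lam W Dl M :: real
  assumes G: "simple_graph V E" and vV: "v \<in> V" and lam: "lam > 0" and W: "W > 0" and Dl: "Dl > 0"
    and key: "exp (-W) * ln (1 + lam) = W / Dl"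
    and M: "real (nbhd_edges E v) \<le> M"
  shows "(\<Sum>I\<in>{I\<in>indep_sets V E. v \<in> I}. lam ^ card I)
       + W / Dl * (\<Sum>I\<in>indep_sets V E. real (card (I \<inter> neighbours E v)) * lam ^ card I)
       \<ge> (lam/(1+lam) * exp (-W) * (1 + W) - 2 * (lam/(1+lam))^2 * (W / Dl) * M) * hardcore_Z V E lam"
proof -
  define A where "A = lam/(1+lam)"
  define k where "k = W / Dl"
  define L where "L = ln (1 + lam)"
  define e where "e = exp (-W)"
  define c where "c = A * e * (1 + W) - 2 * A * A * k * M"
  have A0: "A \<ge> 0" unfolding A_def using lam by simp
  have k0: "k \<ge> 0" unfolding k_def using W Dl by simp
  have keyL: "e * L = k" unfolding e_def L_def k_def by (rule key)
  have termb: "A + k * Zp (YY E v T) E lam \<ge> c * hardcore_Z (YY E v T) E lam"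
    if T: "T \<in> TT V E v" for T
  proof -
    define Y where "Y = YY E v T"
    define ZY where "ZY = hardcore_Z Y E lam"
    define y where "y = card Y"
    define m where "m = card {e\<in>E. e \<subseteq> Y}"
    have finY: "finite Y" unfolding Y_def by (rule finite_YY[OF G])
    have ZY1: "ZY \<ge> 1" unfolding ZY_def using finY lam by (rule Z_ge1)
    have ZYle: "ZY \<le> (1 + lam) ^ y" unfolding ZY_def y_def using finY lam by (rule Z_le)
    have h1: "ZY * (e * (1 + W - real y * L)) \<le> 1"
      unfolding e_def L_def using h1_lemma[OF lam _ ZYle] ZY1 by simp
    have h2: "Zp Y E lam \<ge> A * (real y - 2 * A * real m) * ZY"
      unfolding A_def y_def m_def ZY_def by (rule local_lemma[OF finY sg_edges2[OF G] lam])
    have mM: "real m \<le> M"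
    proof -
      have finN: "finite (neighbours E v)" by (rule finite_subset[OF nb_sub[OF G] sg_finite[OF G]])
      have sub1: "{e\<in>E. e \<subseteq> neighbours E v} \<subseteq> Pow (neighbours E v)" by (rule subsetI) simp
      have fin: "finite {e\<in>E. e \<subseteq> neighbours E v}"
        by (rule finite_subset[OF sub1]) (simp add: finN)
      have Ysub: "Y \<subseteq> neighbours E v" unfolding Y_def by (rule YY_sub)
      have "{e\<in>E. e \<subseteq> Y} \<subseteq> {e\<in>E. e \<subseteq> neighbours E v}"
      proof (rule subsetI)
        fix x assume "x \<in> {e\<in>E. e \<subseteq> Y}"
        then have "x \<in> E" "x \<subseteq> Y" by simp_all
        then show "x \<in> {e\<in>E. e \<subseteq> neighbours E v}" using Ysub by simp
      qed
      then have "m \<le> nbhd_edges E v" unfolding m_def nbhd_edges_def by (rule card_mono[OF fin])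
      then show ?thesis using M by linarith
    qed
    have h2': "Zp Y E lam \<ge> A * (real y - 2 * A * M) * ZY"
    proof -
      have "A * (real y - 2 * A * M) * ZY = A * (real y - 2 * A * real m) * ZY - 2 * (A * A * ZY) * (M - real m)"
        by algebra
      moreover have "2 * (A * A * ZY) * (M - real m) \<ge> 0" using A0 ZY1 mM by simp
      ultimately show ?thesis using h2 by linarith
    qed
    have i1: "A \<ge> A * (ZY * (e * (1 + W - real y * L)))"
      using mult_left_mono[OF h1 A0] by simp
    have i2: "k * Zp Y E lam \<ge> k * (A * (real y - 2 * A * M) * ZY)"
      using mult_left_mono[OF h2' k0] .
    have eq0: "A * (ZY * (e * (1 + W - real y * L))) + k * (A * (real y - 2 * A * M) * ZY) - c * ZY
        = A * ZY * real y * (k - e * L)"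
      unfolding c_def by algebra
    have eq: "A * (ZY * (e * (1 + W - real y * L))) + k * (A * (real y - 2 * A * M) * ZY) = c * ZY"
      using eq0 keyL by simp
    show ?thesis using i1 i2 eq unfolding Y_def[symmetric] ZY_def[symmetric] by linarith
  qed
  have "(\<Sum>I\<in>{I\<in>indep_sets V E. v \<in> I}. lam ^ card I)
       + k * (\<Sum>I\<in>indep_sets V E. real (card (I \<inter> neighbours E v)) * lam ^ card I)
      = (\<Sum>T\<in>TT V E v. lam ^ card T * (A + k * Zp (YY E v T) E lam))"
  proof -
    have "(\<Sum>T\<in>TT V E v. lam ^ card T * (A + k * Zp (YY E v T) E lam))
        = A * (\<Sum>T\<in>TT V E v. lam ^ card T) + k * (\<Sum>T\<in>TT V E v. lam ^ card T * Zp (YY E v T) E lam)"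
      by (simp add: sum.distrib sum_distrib_left distrib_left mult.commute mult.left_commute)
    then show ?thesis
      unfolding P_decomp[OF G vV lam] N_decomp[OF G] A_def by simp
  qed
  also have "\<dots> \<ge> (\<Sum>T\<in>TT V E v. lam ^ card T * (c * hardcore_Z (YY E v T) E lam))"
    by (rule sum_mono, rule mult_left_mono) (use termb lam in auto)
  also have "(\<Sum>T\<in>TT V E v. lam ^ card T * (c * hardcore_Z (YY E v T) E lam)) = c * hardcore_Z V E lam"
    unfolding Z_decomp[OF G, of lam v] sum_distrib_left by (simp add: mult.commute mult.left_commute)
  finally have "c * hardcore_Z V E lam \<le> (\<Sum>I\<in>{I\<in>indep_sets V E. v \<in> I}. lam ^ card I)
       + k * (\<Sum>I\<in>indep_sets V E. real (card (I \<inter> neighbours E v)) * lam ^ card I)" .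
  moreover have "c = lam/(1+lam) * exp (-W) * (1 + W) - 2 * (lam/(1+lam))^2 * (W / Dl) * M"
    unfolding c_def A_def e_def k_def by (simp add: power2_eq_square)
  ultimately show ?thesis unfolding k_def by simp
qed



lemma sum_P_total:
  assumes G: "simple_graph V E"
  shows "(\<Sum>v\<in>V. \<Sum>I\<in>{I\<in>indep_sets V E. v \<in> I}. (lam::real) ^ card I)
       = (\<Sum>I\<in>indep_sets V E. real (card I) * lam ^ card I)"
proof -
  have finV: "finite V" by (rule sg_finite[OF G])
  have finI: "finite (indep_sets V E)" by (rule finite_indep[OF finV])
  have "(\<Sum>v\<in>V. \<Sum>I\<in>{I\<in>indep_sets V E. v \<in> I}. lam ^ card I)
      = (\<Sum>v\<in>V. \<Sum>I\<in>indep_sets V E. if v \<in> I then lam ^ card I else 0)"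
    using finI by (simp add: sum.inter_filter)
  also have "\<dots> = (\<Sum>I\<in>indep_sets V E. \<Sum>v\<in>V. if v \<in> I then lam ^ card I else 0)"
    by (rule sum.swap)
  also have "\<dots> = (\<Sum>I\<in>indep_sets V E. real (card I) * lam ^ card I)"
  proof (rule sum.cong[OF refl])
    fix I assume "I \<in> indep_sets V E"
    then have IV: "I \<subseteq> V" by (rule indep_subset)
    have "(\<Sum>v\<in>V. if v \<in> I then lam ^ card I else 0) = (\<Sum>v\<in>{v\<in>V. v \<in> I}. lam ^ card I)"
      by (rule sum.inter_filter[OF finV, symmetric])
    also have "{v\<in>V. v \<in> I} = I" using IV by blast
    finally show "(\<Sum>v\<in>V. if v \<in> I then lam ^ card I else 0) = real (card I) * lam ^ card I" by simp
  qed
  finally show ?thesis .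
qed

lemma sum_card_nb:
  assumes G: "simple_graph V E" and IV: "I \<subseteq> V"
  shows "(\<Sum>v\<in>V. real (card (I \<inter> neighbours E v))) = (\<Sum>u\<in>I. real (degree E u))"
proof -
  have finV: "finite V" by (rule sg_finite[OF G])
  have finI: "finite I" using IV finV by (rule finite_subset)
  have c1: "real (card (I \<inter> neighbours E v)) = (\<Sum>u\<in>I. if {u,v} \<in> E then 1 else 0)" for v
  proof -
    have "I \<inter> neighbours E v = {u\<in>I. {u,v} \<in> E}" unfolding neighbours_def by blast
    then have "real (card (I \<inter> neighbours E v)) = (\<Sum>u\<in>{u\<in>I. {u,v} \<in> E}. 1)" by simp
    also have "\<dots> = (\<Sum>u\<in>I. if {u,v} \<in> E then 1 else 0)" by (rule sum.inter_filter[OF finI])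
    finally show ?thesis .
  qed
  have c2: "(\<Sum>v\<in>V. if {u,v} \<in> E then 1 else 0) = real (degree E u)" for u
  proof -
    have "neighbours E u = {v\<in>V. {u,v} \<in> E}"
    proof (intro equalityI subsetI)
      fix w assume w: "w \<in> neighbours E u"
      then have "w \<in> V" using nb_sub[OF G] by (rule subsetD[rotated])
      moreover have "{w,u} \<in> E" using w by (simp add: neighbours_def)
      moreover have "{w,u} = {u,w}" by (rule insert_commute)
      ultimately show "w \<in> {v\<in>V. {u,v} \<in> E}" by simp
    next
      fix w assume w: "w \<in> {v\<in>V. {u,v} \<in> E}"
      then have "{u,w} \<in> E" by simp
      moreover have "{w,u} = {u,w}" by (rule insert_commute)
      ultimately show "w \<in> neighbours E u" by (simp add: neighbours_def)
    qed
    then have "real (degree E u) = (\<Sum>v\<in>{v\<in>V. {u,v} \<in> E}. 1)" unfolding degree_def by simp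
    also have "\<dots> = (\<Sum>v\<in>V. if {u,v} \<in> E then 1 else 0)" by (rule sum.inter_filter[OF finV])
    finally show ?thesis by simp
  qed
  have "(\<Sum>v\<in>V. real (card (I \<inter> neighbours E v))) = (\<Sum>v\<in>V. \<Sum>u\<in>I. if {u,v} \<in> E then 1 else 0)"
    unfolding c1 ..
  also have "\<dots> = (\<Sum>u\<in>I. \<Sum>v\<in>V. if {u,v} \<in> E then 1 else 0)" by (rule sum.swap)
  also have "\<dots> = (\<Sum>u\<in>I. real (degree E u))" unfolding c2 ..
  finally show ?thesis .
qed

lemma global_bound:
  fixes lam W Dl M :: real
  assumes G: "simple_graph V E" and Vne: "V \<noteq> {}" and lam: "lam > 0" and W: "W > 0" and Dl: "Dl > 0"
    and key: "exp (-W) * ln (1 + lam) = W / Dl"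
    and deg: "\<forall>v\<in>V. real (degree E v) \<le> Dl"
    and M: "\<forall>v\<in>V. real (nbhd_edges E v) \<le> M"
  shows "hardcore_expected_size V E lam / real (card V)
     \<ge> (lam/(1+lam) * exp (-W) * (1 + W) - 2 * (lam/(1+lam))^2 * (W / Dl) * M) / (1 + W)"
proof -
  define c where "c = lam/(1+lam) * exp (-W) * (1 + W) - 2 * (lam/(1+lam))^2 * (W / Dl) * M"
  define Z where "Z = hardcore_Z V E lam"
  define ES where "ES = (\<Sum>I\<in>indep_sets V E. real (card I) * lam ^ card I)"
  define n where "n = real (card V)"
  have finV: "finite V" by (rule sg_finite[OF G])
  have n0: "n > 0" unfolding n_def using finV Vne by (simp add: card_gt_0_iff)
  have Z1: "Z \<ge> 1" unfolding Z_def using finV lam by (rule Z_ge1)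
  define Pv where "Pv v = (\<Sum>I\<in>{I\<in>indep_sets V E. v \<in> I}. lam ^ card I)" for v
  define Nv where "Nv v = (\<Sum>I\<in>indep_sets V E. real (card (I \<inter> neighbours E v)) * lam ^ card I)" for v
  have vb: "Pv v + W / Dl * Nv v \<ge> c * Z" if "v \<in> V" for v
    unfolding Pv_def Nv_def c_def Z_def
    using vertex_bound[OF G that lam W Dl key] M that by blast
  have sP: "(\<Sum>v\<in>V. Pv v) = ES" unfolding Pv_def ES_def by (rule sum_P_total[OF G])
  have sN: "(\<Sum>v\<in>V. Nv v) \<le> Dl * ES"
  proof -
    have "(\<Sum>v\<in>V. Nv v) = (\<Sum>I\<in>indep_sets V E. lam ^ card I * (\<Sum>v\<in>V. real (card (I \<inter> neighbours E v))))"
      unfolding Nv_def by (subst sum.swap) (simp add: sum_distrib_left mult.commute)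
    also have "\<dots> \<le> (\<Sum>I\<in>indep_sets V E. lam ^ card I * (Dl * real (card I)))"
    proof (rule sum_mono)
      fix I assume "I \<in> indep_sets V E"
      then have IV: "I \<subseteq> V" by (rule indep_subset)
      have "(\<Sum>v\<in>V. real (card (I \<inter> neighbours E v))) = (\<Sum>u\<in>I. real (degree E u))"
        by (rule sum_card_nb[OF G IV])
      also have "\<dots> \<le> (\<Sum>u\<in>I. Dl)" by (rule sum_mono) (use deg IV in blast)
      also have "\<dots> = Dl * real (card I)" by simp
      finally show "lam ^ card I * (\<Sum>v\<in>V. real (card (I \<inter> neighbours E v))) \<le> lam ^ card I * (Dl * real (card I))"
        by (rule mult_left_mono) (use lam in simp)
    qed
    also have "\<dots> = Dl * ES" unfolding ES_def by (simp add: sum_distrib_left mult.commute mult.left_commute)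
    finally show ?thesis .
  qed
  have "n * (c * Z) = (\<Sum>v\<in>V. c * Z)" unfolding n_def by simp
  also have "\<dots> \<le> (\<Sum>v\<in>V. Pv v + W / Dl * Nv v)" by (rule sum_mono) (rule vb)
  also have "\<dots> = ES + W / Dl * (\<Sum>v\<in>V. Nv v)" by (simp add: sum.distrib sum_distrib_left sP)
  also have "W / Dl * (\<Sum>v\<in>V. Nv v) \<le> W / Dl * (Dl * ES)"
    by (rule mult_left_mono[OF sN]) (use W Dl in simp)
  also have "W / Dl * (Dl * ES) = W * ES" using Dl by simp
  finally have main: "n * c * Z \<le> (1 + W) * ES" by (simp add: algebra_simps)
  have ESZ: "hardcore_expected_size V E lam = ES / Z"
    unfolding hardcore_expected_size_def ES_def Z_def
    by (simp add: sum_divide_distrib)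
  have "c / (1 + W) \<le> ES / Z / n"
  proof -
    have "c * (Z * n) \<le> (1 + W) * ES" using main by (simp add: algebra_simps)
    then show ?thesis using W Z1 n0 by (simp add: field_simps)
  qed
  then show ?thesis unfolding ESZ c_def n_def by simp
qed



lemma final_arith:
  fixes A L Dl W f xx :: real
  assumes A: "A > 0" "A \<le> L" and Dl: "Dl > 0" and W: "W > 0" and f: "f \<ge> 0" and xx: "xx = Dl * L"
  shows "(A * (W / xx) * (1 + W) - 2 * A^2 * (W / Dl) * (Dl^2 / f)) / (1 + W)
         \<ge> (1 + - (2 * xx^2 / (f * W))) * A * (W / xx)"
proof (cases "f = 0")
  case True
  then show ?thesis using W by simp
next
  case False
  then have fp: "f > 0" using f by simp
  have L: "L > 0" using A by linarith
  have xp: "xx > 0" using xx Dl L by simp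
  have lhs: "(A * (W / xx) * (1 + W) - 2 * A^2 * (W / Dl) * (Dl^2 / f)) / (1 + W)
      = A * (W / xx) - 2 * A * Dl / f * (A * W / (1 + W))"
  proof -
    have W1: "1 + W \<noteq> 0" using W by simp
    have e1: "A * (W / xx) * (1 + W) / (1 + W) = A * (W / xx)" using W1 by simp
    have e2: "2 * A^2 * (W / Dl) * (Dl^2 / f) / (1 + W) = 2 * A * Dl / f * (A * W / (1 + W))"
      using Dl fp W1 by (simp add: field_simps power2_eq_square)
    show ?thesis by (simp only: diff_divide_distrib e1 e2)
  qed
  have rhs: "(1 + - (2 * xx^2 / (f * W))) * A * (W / xx) = A * (W / xx) - 2 * A * Dl / f * L"
  proof -
    have nz: "W \<noteq> 0" "xx \<noteq> 0" "f \<noteq> 0" using W xp fp by auto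
    have "2 * xx^2 / (f * W) * A * (W / xx) = 2 * A * xx / f"
      using nz by (simp add: field_simps power2_eq_square)
    also have "\<dots> = 2 * A * Dl / f * L" unfolding xx by simp
    finally have e: "2 * xx^2 / (f * W) * A * (W / xx) = 2 * A * Dl / f * L" .
    have "(1 + - (2 * xx^2 / (f * W))) * A * (W / xx) = A * (W / xx) - 2 * xx^2 / (f * W) * A * (W / xx)"
      by (simp add: algebra_simps)
    then show ?thesis unfolding e .
  qed
  have "A * W / (1 + W) \<le> L"
  proof -
    have "A * W / (1 + W) \<le> A" using A W by (simp add: field_simps)
    then show ?thesis using A by linarith
  qed
  moreover have "2 * A * Dl / f \<ge> 0" using A Dl fp by simp
  ultimately have "2 * A * Dl / f * (A * W / (1 + W)) \<le> 2 * A * Dl / f * L"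
    by (intro mult_left_mono)
  then show ?thesis unfolding lhs rhs by linarith
qed

theorem theorem2p1:
  fixes D :: "real \<Rightarrow> nat" and lam :: "real \<Rightarrow> real"
  assumes D_pos: "\<forall>f. D f > 0"
    and lam_pos: "\<forall>f. lam f > 0"
    and f_le: "\<forall>f. f \<le> (real (D f))\<^sup>2 + 1"
    and lim1: "filterlim (\<lambda>f. real (D f) * ln (1 + lam f)) at_top at_top"
    and lim2: "((\<lambda>f. 2 * (real (D f) * ln (1 + lam f))\<^sup>2
                   / (f * lambertW (real (D f) * ln (1 + lam f)))) \<longlongrightarrow> 0) at_top"
  shows "\<exists>\<delta> :: real \<Rightarrow> real. (\<delta> \<longlongrightarrow> 0) at_top \<and>
    (\<forall>f (V :: nat set) E. simple_graph V E \<and> V \<noteq> {} \<and>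
        (\<forall>v\<in>V. degree E v \<le> D f) \<and>
        (\<forall>v\<in>V. real (nbhd_edges E v) \<le> (real (D f))\<^sup>2 / f) \<longrightarrow>
      hardcore_expected_size V E (lam f) / real (card V)
        \<ge> (1 + \<delta> f) * (lam f / (1 + lam f))
           * (lambertW (real (D f) * ln (1 + lam f)) / (real (D f) * ln (1 + lam f))))"
proof -
  define \<delta> where "\<delta> f = - (2 * (real (D f) * ln (1 + lam f))\<^sup>2
                   / (f * lambertW (real (D f) * ln (1 + lam f))))" for f
  have lim: "(\<delta> \<longlongrightarrow> 0) at_top"
    unfolding \<delta>_def using tendsto_minus[OF lim2] by simp
  have bound: "hardcore_expected_size V E (lam f) / real (card V)
        \<ge> (1 + \<delta> f) * (lam f / (1 + lam f))
           * (lambertW (real (D f) * ln (1 + lam f)) / (real (D f) * ln (1 + lam f)))"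
    if G: "simple_graph V E" and Vne: "V \<noteq> {}" and deg: "\<forall>v\<in>V. degree E v \<le> D f"
      and nb: "\<forall>v\<in>V. real (nbhd_edges E v) \<le> (real (D f))\<^sup>2 / f"
    for f and V :: "nat set" and E
  proof -
    define Dl where "Dl = real (D f)"
    define la where "la = lam f"
    define L where "L = ln (1 + la)"
    define xx where "xx = Dl * L"
    define W where "W = lambertW xx"
    define A where "A = la / (1 + la)"
    have Dl: "Dl > 0" unfolding Dl_def using D_pos by simp
    have la: "la > 0" unfolding la_def using lam_pos by simp
    have L: "L > 0" unfolding L_def using la by simp
    have xp: "xx > 0" unfolding xx_def using Dl L by simp
    have W: "W > 0" "W * exp W = xx" unfolding W_def using lambertW_prop[OF xp] by auto
    have A: "A > 0" "A \<le> L" unfolding A_def L_def using la ln_ge_A[OF la] by auto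
    have f0: "f \<ge> 0"
    proof (rule ccontr)
      assume "\<not> f \<ge> 0"
      then have "(real (D f))\<^sup>2 / f < 0" using D_pos by (simp add: divide_pos_neg)
      moreover obtain v where "v \<in> V" using Vne by blast
      ultimately show False using nb by force
    qed
    have ew: "exp (-W) = W / xx"
      using W xp by (simp add: exp_minus field_simps)
    have key: "exp (-W) * ln (1 + la) = W / Dl"
      unfolding ew using xp Dl L unfolding xx_def L_def by (simp add: field_simps)
    have degr: "\<forall>v\<in>V. real (degree E v) \<le> Dl" unfolding Dl_def using deg by simp
    have nb': "\<forall>v\<in>V. real (nbhd_edges E v) \<le> Dl^2 / f" unfolding Dl_def using nb by simp
    have gb: "hardcore_expected_size V E la / real (card V)
       \<ge> (la/(1+la) * exp (-W) * (1 + W) - 2 * (la/(1+la))^2 * (W / Dl) * (Dl^2 / f)) / (1 + W)"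
      by (rule global_bound[OF G Vne la W(1) Dl key degr nb'])
    have fa: "(A * (W / xx) * (1 + W) - 2 * A^2 * (W / Dl) * (Dl^2 / f)) / (1 + W)
         \<ge> (1 + - (2 * xx^2 / (f * W))) * A * (W / xx)"
      by (rule final_arith[OF A Dl W(1) f0 xx_def])
    have "hardcore_expected_size V E la / real (card V) \<ge> (1 + - (2 * xx^2 / (f * W))) * A * (W / xx)"
      using gb fa unfolding ew A_def by linarith
    then show ?thesis unfolding \<delta>_def W_def xx_def A_def L_def Dl_def la_def .
  qed
  show ?thesis
    by (rule exI[of _ \<delta>]) (use lim bound in blast)
qed


end
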